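(* Let $I=[-1,1]$ and let $F:I\times I\to\mathbb R$ satisfy $F,F'_y\in\mathscr H(I,I)$, $F(0,0)=0$ and $F'_y(0,0)\neq0$. Then there exist an open neighborhood $U_1\times U_2\subset I\times I$ of $(0,0)$ and a unique $f\in\mathcal H^1(U_1)$ with $f(U_1)\subset U_2$ such that for all $(x,y)\in U_1\times U_2$: $F(x,y)=0$ if and only if $y=f(x)$.
   Context: For bounded intervals $I_1,I_2\subset\mathbb R$, $\mathscr H(I_1,I_2)$ is the set of functions $F:I_1\times I_2\to\mathbb R$ such that: (i) $F(x,\cdot)\in C^1(I_2)$ for each fixed $x\in I_1$; (ii) $F(\cdot,y)\in\mathcal H^1(I_1)$ for each fixed $y\in I_2$; (iii) there is $g\in L^2(I_1)$ with $|F'_x(x,y)|\le g(x)$ for all $(x,y)\in I_1\times I_2$. Here $\mathcal H^1(U)$ is the Sobolev space of (absolutely continuous) functions $f$ on $U$ with $f,f'\in L^2(U)$. *)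

theory Defs
  imports "HOL-Analysis.Analysis"
begin

definition L2 :: "real set \<Rightarrow> (real \<Rightarrow> real) \<Rightarrow> bool" where
  "L2 U h \<longleftrightarrow> h \<in> borel_measurable (lebesgue_on U) \<and>
                integrable (lebesgue_on U) (\<lambda>x. (h x)\<^sup>2)"

text \<open>Sobolev space H^1(U) on an interval U: f is absolutely continuous on U, i.e. an
  indefinite integral of its (a.e.) derivative f', with f and f' in L^2(U).\<close>
definition H1 :: "real set \<Rightarrow> (real \<Rightarrow> real) set" where
  "H1 U = {f. L2 U f \<and> (\<exists>f'. L2 U f' \<and>
      (\<forall>a\<in>U. \<forall>b\<in>U. a \<le> b \<longrightarrow> (f' has_integral (f b - f a)) {a..b}))}"

definition C1_on :: "real set \<Rightarrow> (real \<Rightarrow> real) \<Rightarrow> bool" where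
  "C1_on S h \<longleftrightarrow> (\<exists>D. continuous_on S D \<and>
      (\<forall>y\<in>S. (h has_real_derivative D y) (at y within S)))"

text \<open>The class H(I1,I2). Condition (iii) is stated for a representative Fx of the
  (a.e.) partial derivative in x: Fx(.,y) is a derivative of F(.,y) in the sense of H^1.\<close>
definition Hclass :: "real set \<Rightarrow> real set \<Rightarrow> (real \<Rightarrow> real \<Rightarrow> real) \<Rightarrow> bool" where
  "Hclass I1 I2 F \<longleftrightarrow>
     (\<forall>x\<in>I1. C1_on I2 (F x)) \<and>
     (\<forall>y\<in>I2. (\<lambda>x. F x y) \<in> H1 I1) \<and>
     (\<exists>Fx g. L2 I1 g \<and>
        (\<forall>y\<in>I2. \<forall>a\<in>I1. \<forall>b\<in>I1. a \<le> b \<longrightarrow>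
            ((\<lambda>x. Fx x y) has_integral (F b y - F a y)) {a..b}) \<and>
        (\<forall>x\<in>I1. \<forall>y\<in>I2. \<bar>Fx x y\<bar> \<le> g x))"

end

theory Submission
  imports Defs
begin

lemma measure_Icc_finite:
  fixes M :: "real measure"
  assumes sets: "sets M = sets borel"
    and bnd: "\<And>a b. a \<le> b \<Longrightarrow> emeasure M {a..b} \<le> ennreal C"
  shows "emeasure M UNIV \<le> ennreal C"
proof -
  let ?A = "\<lambda>n::nat. {- real n .. real n}"
  have "(SUP n. emeasure M (?A n)) = emeasure M (\<Union>n. ?A n)"
    by (rule SUP_emeasure_incseq) (auto simp: sets incseq_def)
  moreover have "(\<Union>n. ?A n) = UNIV"
  proof -
    { fix x :: real
      obtain n where "\<bar>x\<bar> \<le> real n" using real_arch_simple by blast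
      then have "x \<in> (\<Union>n. ?A n)" by (auto intro!: exI[of _ n]) }
    then show ?thesis by blast
  qed
  moreover have "(SUP n. emeasure M (?A n)) \<le> ennreal C"
    by (rule SUP_least) (auto intro: bnd)
  ultimately show ?thesis by simp
qed

lemma RN_interval:
  fixes h psi :: "real \<Rightarrow> real" and a0 b0 :: real
  assumes ab: "a0 \<le> b0"
    and psi_int: "psi absolutely_integrable_on {a0..b0}"
    and psi_nn: "\<And>x. x \<in> {a0..b0} \<Longrightarrow> 0 \<le> psi x"
    and h_cont: "continuous_on {a0..b0} h"
    and h_mono: "\<And>x y. a0 \<le> x \<Longrightarrow> x \<le> y \<Longrightarrow> y \<le> b0 \<Longrightarrow> h x \<le> h y"
    and h_bnd: "\<And>x y. a0 \<le> x \<Longrightarrow> x \<le> y \<Longrightarrow> y \<le> b0 \<Longrightarrow> h y - h x \<le> integral {x..y} psi"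
  shows "\<exists>k. k \<in> borel_measurable borel \<and> (\<forall>x. 0 \<le> k x) \<and>
     (AE x in lebesgue. x \<in> {a0..b0} \<longrightarrow> k x \<le> psi x) \<and>
     (\<forall>a b. a0 \<le> a \<longrightarrow> a \<le> b \<longrightarrow> b \<le> b0 \<longrightarrow> (k has_integral (h b - h a)) {a..b})"
proof -
  define cl where "cl x = max a0 (min b0 x)" for x
  have cl_in: "cl x \<in> {a0..b0}" for x using ab by (auto simp: cl_def)
  have cl_mono: "x \<le> y \<Longrightarrow> cl x \<le> cl y" for x y by (auto simp: cl_def)
  have cl_cont: "continuous_on UNIV cl" unfolding cl_def by (intro continuous_intros)
  have psi_i: "psi integrable_on {a0..b0}"
    using psi_int set_lebesgue_integral_eq_integral(1) by blast
  have psi_sub: "psi integrable_on {x..y}" if "a0 \<le> x" "y \<le> b0" for x y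
    using integrable_on_subinterval[OF psi_i] that by auto
  define P where "P x = integral {a0..x} psi" for x
  have P_add: "P y - P x = integral {x..y} psi" if "a0 \<le> x" "x \<le> y" "y \<le> b0" for x y
  proof -
    have "integral {a0..x} psi + integral {x..y} psi = integral {a0..y} psi"
      by (rule Henstock_Kurzweil_Integration.integral_combine) (use that psi_sub in auto)
    then show ?thesis unfolding P_def by simp
  qed
  have P_mono: "P x \<le> P y" if "a0 \<le> x" "x \<le> y" "y \<le> b0" for x y
  proof -
    have "0 \<le> integral {x..y} psi"
      using that by (intro integral_nonneg psi_sub psi_nn) auto
    then show ?thesis using P_add[OF that] by simp
  qed
  have P_cont: "continuous_on {a0..b0} P"
    unfolding P_def by (rule indefinite_integral_continuous_1[OF psi_i])
  define ht where "ht x = h (cl x)" for x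
  define Pt where "Pt x = P (cl x)" for x
  define Rt where "Rt x = Pt x - ht x" for x
  have ht_mono: "ht x \<le> ht y" if "x \<le> y" for x y
    unfolding ht_def using cl_in[of x] cl_in[of y] cl_mono[OF that] by (intro h_mono) auto
  have Pt_mono: "Pt x \<le> Pt y" if "x \<le> y" for x y
    unfolding Pt_def using cl_in[of x] cl_in[of y] cl_mono[OF that] by (intro P_mono) auto
  have Rt_mono: "Rt x \<le> Rt y" if "x \<le> y" for x y
  proof -
    have "h (cl y) - h (cl x) \<le> integral {cl x..cl y} psi"
      using cl_in[of x] cl_in[of y] cl_mono[OF that] by (intro h_bnd) auto
    moreover have "P (cl y) - P (cl x) = integral {cl x..cl y} psi"
      using cl_in[of x] cl_in[of y] cl_mono[OF that] by (intro P_add) auto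
    ultimately show ?thesis unfolding Rt_def Pt_def ht_def by simp
  qed
  have ht_cont: "continuous_on UNIV ht"
    unfolding ht_def by (rule continuous_on_compose2[OF h_cont cl_cont]) (use cl_in in auto)
  have Pt_cont: "continuous_on UNIV Pt"
    unfolding Pt_def by (rule continuous_on_compose2[OF P_cont cl_cont]) (use cl_in in auto)
  have Rt_cont: "continuous_on UNIV Rt"
    unfolding Rt_def by (intro continuous_on_diff Pt_cont ht_cont)
  have ht_bnd: "h a0 \<le> ht x \<and> ht x \<le> h b0" for x
    unfolding ht_def using cl_in[of x] by (auto intro!: h_mono)
  have Pt_bnd: "P a0 \<le> Pt x \<and> Pt x \<le> P b0" for x
    unfolding Pt_def using cl_in[of x] by (auto intro!: P_mono)
  have Rt_bnd: "Rt a0 \<le> Rt x \<and> Rt x \<le> Rt b0" for x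
  proof -
    have "Rt (cl x) = Rt x" unfolding Rt_def Pt_def ht_def using cl_in[of x]
      by (auto simp: cl_def)
    moreover have "Rt a0 \<le> Rt (cl x)" "Rt (cl x) \<le> Rt b0" using cl_in[of x] by (auto intro!: Rt_mono)
    ultimately show ?thesis by simp
  qed

  define psit where "psit x = indicator {a0..b0} x * psi x" for x
  have psit_nn: "0 \<le> psit x" for x using psi_nn by (auto simp: psit_def indicator_def)
  have psit_meas: "psit \<in> borel_measurable lebesgue"
    using psi_int unfolding set_integrable_def psit_def by (simp add: borel_measurable_integrable)
  obtain psib0 where psib0: "psib0 \<in> borel_measurable lborel" "AE x in lborel. psit x = psib0 x"
    using completion_ex_borel_measurable_real[of psit lborel] psit_meas by auto
  define psib where "psib x = max 0 (psib0 x)" for x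
  have psib_meas: "psib \<in> borel_measurable borel" using psib0(1) unfolding psib_def by simp
  have psib_nn: "0 \<le> psib x" for x by (simp add: psib_def)
  have AE_psib: "AE x in lborel. psit x = psib x"
    using psib0(2) by eventually_elim (metis psit_nn max.absorb2 psib_def)
  obtain NN where NN: "{x. psit x \<noteq> psib x} \<subseteq> NN" "NN \<in> null_sets lborel"
  proof -
    from AE_psib obtain N where "{x \<in> space lborel. \<not> psit x = psib x} \<subseteq> N" "emeasure lborel N = 0" "N \<in> sets lborel"
      by (rule AE_E)
    then show ?thesis using that[of N] by (auto simp: null_sets_def)
  qed
  have negl: "negligible NN"
    using NN(2) by (simp add: negligible_iff_null_sets null_sets_completionI)
  have IF: "((\<lambda>x. psib x * indicator {a..b} x) has_integral (Pt b - Pt a)) UNIV" if "a \<le> b" for a b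
  proof -
    have "(psi has_integral (Pt b - Pt a)) ({a..b} \<inter> {a0..b0})"
    proof (cases "max a a0 \<le> min b b0")
      case True
      then have "cl a = max a a0" "cl b = min b b0" using that ab by (auto simp: cl_def)
      then have "Pt b - Pt a = integral {max a a0..min b b0} psi"
        unfolding Pt_def using P_add[of "max a a0" "min b b0"] True by simp
      moreover have "psi integrable_on {max a a0..min b b0}" by (rule psi_sub) auto
      ultimately show ?thesis by (simp add: Int_atLeastAtMost has_integral_integral)
    next
      case False
      then have "a > b0 \<or> b < a0" using that ab by auto
      then have "cl a = cl b" using that by (auto simp: cl_def)
      moreover have "{a..b} \<inter> {a0..b0} = {}" using False by auto
      ultimately show ?thesis unfolding Pt_def by simp
    qed
    then have "((\<lambda>x. if x \<in> {a..b} \<inter> {a0..b0} then psi x else 0) has_integral (Pt b - Pt a)) UNIV"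
      by (simp only: has_integral_restrict_UNIV)
    moreover have "(\<lambda>x. if x \<in> {a..b} \<inter> {a0..b0} then psi x else 0) = (\<lambda>x. psit x * indicator {a..b} x)"
      by (auto simp: psit_def indicator_def fun_eq_iff)
    ultimately have "((\<lambda>x. psit x * indicator {a..b} x) has_integral (Pt b - Pt a)) UNIV" by simp
    note * = this
    show ?thesis
      by (rule has_integral_spike[OF negl _ *]) (use NN(1) in \<open>metis (mono_tags, lifting) DiffD2 mem_Collect_eq subsetD\<close>)
  qed

  define D where "D = density lborel (\<lambda>x. ennreal (psib x))"
  define N1 where "N1 = interval_measure ht"
  define N2 where "N2 = interval_measure Rt"
  have sets_D: "sets D = sets borel" and space_D: "space D = UNIV" by (simp_all add: D_def)
  have sets_N1: "sets N1 = sets borel" and space_N1: "space N1 = UNIV" by (simp_all add: N1_def)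
  have sets_N2: "sets N2 = sets borel" and space_N2: "space N2 = UNIV" by (simp_all add: N2_def)
  have D_Icc: "emeasure D {a..b} = ennreal (Pt b - Pt a)" if "a \<le> b" for a b
  proof -
    have "emeasure D {a..b} = (\<integral>\<^sup>+x. ennreal (psib x) * indicator {a..b} x \<partial>lborel)"
      unfolding D_def using psib_meas by (subst emeasure_density) auto
    also have "\<dots> = (\<integral>\<^sup>+x. ennreal (psib x * indicator {a..b} x) \<partial>lborel)"
      by (intro nn_integral_cong) (auto simp: indicator_def)
    also have "\<dots> = ennreal (Pt b - Pt a)"
      using psib_meas psib_nn IF[OF that] by (intro nn_integral_has_integral_lborel) auto
    finally show ?thesis .
  qed
  have N1_Icc: "emeasure N1 {a..b} = ennreal (ht b - ht a)" if "a \<le> b" for a b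
    unfolding N1_def using that ht_mono ht_cont by (intro emeasure_interval_measure_Icc) auto
  have N2_Icc: "emeasure N2 {a..b} = ennreal (Rt b - Rt a)" if "a \<le> b" for a b
    unfolding N2_def using that Rt_mono Rt_cont by (intro emeasure_interval_measure_Icc) auto
  have fin_D: "finite_measure D"
  proof
    have "emeasure D UNIV \<le> ennreal (P b0 - P a0)"
    proof (rule measure_Icc_finite[OF sets_D])
      fix a b :: real assume "a \<le> b"
      then show "emeasure D {a..b} \<le> ennreal (P b0 - P a0)"
        using Pt_bnd[of a] Pt_bnd[of b] by (simp add: D_Icc ennreal_leI)
    qed
    then show "emeasure D (space D) \<noteq> \<infinity>" by (auto simp: space_D top_unique)
  qed
  have fin_N1: "finite_measure N1"
  proof
    have "emeasure N1 UNIV \<le> ennreal (h b0 - h a0)"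
    proof (rule measure_Icc_finite[OF sets_N1])
      fix a b :: real assume "a \<le> b"
      then show "emeasure N1 {a..b} \<le> ennreal (h b0 - h a0)"
        using ht_bnd[of a] ht_bnd[of b] by (simp add: N1_Icc ennreal_leI)
    qed
    then show "emeasure N1 (space N1) \<noteq> \<infinity>" by (auto simp: space_N1 top_unique)
  qed
  have fin_N2: "finite_measure N2"
  proof
    have "emeasure N2 UNIV \<le> ennreal (Rt b0 - Rt a0)"
    proof (rule measure_Icc_finite[OF sets_N2])
      fix a b :: real assume "a \<le> b"
      then show "emeasure N2 {a..b} \<le> ennreal (Rt b0 - Rt a0)"
        using Rt_bnd[of a] Rt_bnd[of b] by (simp add: N2_Icc ennreal_leI)
    qed
    then show "emeasure N2 (space N2) \<noteq> \<infinity>" by (auto simp: space_N2 top_unique)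
  qed
  have mIcc: "measure N1 {a..b} + measure N2 {a..b} = measure D {a..b}" for a b
  proof (cases "a \<le> b")
    case True
    have "measure N1 {a..b} = ht b - ht a" using N1_Icc[OF True] ht_mono[OF True]
      by (simp add: measure_def)
    moreover have "measure N2 {a..b} = Rt b - Rt a" using N2_Icc[OF True] Rt_mono[OF True]
      by (simp add: measure_def)
    moreover have "measure D {a..b} = Pt b - Pt a" using D_Icc[OF True] Pt_mono[OF True]
      by (simp add: measure_def)
    ultimately show ?thesis by (simp add: Rt_def)
  next
    case False then show ?thesis by simp
  qed
  have mUNIV: "measure N1 UNIV + measure N2 UNIV = measure D UNIV"
  proof -
    let ?A = "\<lambda>n::nat. {- real n .. real n}"
    have U: "(\<Union>n. ?A n) = UNIV"
    proof -
      { fix x :: real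
        obtain n where "\<bar>x\<bar> \<le> real n" using real_arch_simple by blast
        then have "x \<in> (\<Union>n. ?A n)" by (auto intro!: exI[of _ n]) }
      then show ?thesis by blast
    qed
    have inc: "incseq ?A" by (auto simp: incseq_def)
    have rng: "range ?A \<subseteq> sets borel" by auto
    have "(\<lambda>n. measure N1 (?A n)) \<longlonglongrightarrow> measure N1 UNIV"
      using finite_measure.finite_Lim_measure_incseq[OF fin_N1, of ?A] inc U rng by (simp add: sets_N1)
    moreover have "(\<lambda>n. measure N2 (?A n)) \<longlonglongrightarrow> measure N2 UNIV"
      using finite_measure.finite_Lim_measure_incseq[OF fin_N2, of ?A] inc U rng by (simp add: sets_N2)
    ultimately have "(\<lambda>n. measure N1 (?A n) + measure N2 (?A n)) \<longlonglongrightarrow> measure N1 UNIV + measure N2 UNIV"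
      by (rule tendsto_add)
    then have "(\<lambda>n. measure D (?A n)) \<longlonglongrightarrow> measure N1 UNIV + measure N2 UNIV"
      by (simp only: mIcc)
    moreover have "(\<lambda>n. measure D (?A n)) \<longlonglongrightarrow> measure D UNIV"
      using finite_measure.finite_Lim_measure_incseq[OF fin_D, of ?A] inc U rng by (simp add: sets_D)
    ultimately show ?thesis by (rule LIMSEQ_unique)
  qed
  have mAll: "measure N1 A + measure N2 A = measure D A" if "A \<in> sets borel" for A
  proof -
    let ?G = "range (\<lambda>(a, b). {a..b::real})"
    have sb: "sets borel = sigma_sets UNIV ?G"
      by (subst borel_eq_atLeastAtMost) (simp add: sets_measure_of)
    have AG: "A \<in> sigma_sets UNIV ?G" using that sb by simp
    have IS: "Int_stable ?G" by (auto simp: Int_stable_def Int_atLeastAtMost)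
    have CL: "?G \<subseteq> Pow UNIV" by simp
    from IS CL AG show ?thesis
    proof (induction rule: sigma_sets_induct_disjoint)
      case (basic A) then show ?case using mIcc by auto
    next
      case empty show ?case by simp
    next
      case (compl A)
      then have As: "A \<in> sets borel" using sb by simp
      have "measure N1 (UNIV - A) = measure N1 UNIV - measure N1 A"
        using finite_measure.finite_measure_compl[OF fin_N1, of A] As by (simp add: sets_N1 space_N1)
      moreover have "measure N2 (UNIV - A) = measure N2 UNIV - measure N2 A"
        using finite_measure.finite_measure_compl[OF fin_N2, of A] As by (simp add: sets_N2 space_N2)
      moreover have "measure D (UNIV - A) = measure D UNIV - measure D A"
        using finite_measure.finite_measure_compl[OF fin_D, of A] As by (simp add: sets_D space_D)
      ultimately show ?case using mUNIV compl.IH by simp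
    next
      case (union A)
      then have As: "range A \<subseteq> sets borel" using sb by simp
      have "(\<lambda>i. measure N1 (A i)) sums measure N1 (\<Union>i. A i)"
        using finite_measure.finite_measure_UNION[OF fin_N1, of A] As union.hyps(1) by (simp add: sets_N1)
      moreover have "(\<lambda>i. measure N2 (A i)) sums measure N2 (\<Union>i. A i)"
        using finite_measure.finite_measure_UNION[OF fin_N2, of A] As union.hyps(1) by (simp add: sets_N2)
      ultimately have "(\<lambda>i. measure N1 (A i) + measure N2 (A i)) sums (measure N1 (\<Union>i. A i) + measure N2 (\<Union>i. A i))"
        by (rule sums_add)
      then have "(\<lambda>i. measure D (A i)) sums (measure N1 (\<Union>i. A i) + measure N2 (\<Union>i. A i))"
        by (simp only: union.IH)
      moreover have "(\<lambda>i. measure D (A i)) sums measure D (\<Union>i. A i)"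
        using finite_measure.finite_measure_UNION[OF fin_D, of A] As union.hyps(1) by (simp add: sets_D)
      ultimately show ?case by (rule sums_unique2)
    qed
  qed

  have ac: "absolutely_continuous lborel N1"
    unfolding absolutely_continuous_def
  proof
    fix A :: "real set" assume A: "A \<in> null_sets lborel"
    then have As: "A \<in> sets borel" by auto
    have "emeasure D A = (\<integral>\<^sup>+x. ennreal (psib x) * indicator A x \<partial>lborel)"
      unfolding D_def using psib_meas As by (subst emeasure_density) auto
    also have "\<dots> = 0" using A by (rule nn_integral_null_set)
    finally have "measure D A = 0" by (simp add: measure_def)
    then have "measure N1 A = 0" using mAll[OF As] by (simp add: add_nonneg_eq_0_iff)
    then have "emeasure N1 A = 0"
      using finite_measure.emeasure_eq_measure[OF fin_N1] by simp
    then show "A \<in> null_sets N1" using As sets_N1 by (auto intro: null_setsI)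
  qed
  have ac2: "absolutely_continuous lborel N2"
    unfolding absolutely_continuous_def
  proof
    fix A :: "real set" assume A: "A \<in> null_sets lborel"
    then have As: "A \<in> sets borel" by auto
    have "emeasure D A = (\<integral>\<^sup>+x. ennreal (psib x) * indicator A x \<partial>lborel)"
      unfolding D_def using psib_meas As by (subst emeasure_density) auto
    also have "\<dots> = 0" using A by (rule nn_integral_null_set)
    finally have "measure D A = 0" by (simp add: measure_def)
    then have "measure N2 A = 0" using mAll[OF As] by (simp add: add_nonneg_eq_0_iff)
    then have "emeasure N2 A = 0"
      using finite_measure.emeasure_eq_measure[OF fin_N2] by simp
    then show "A \<in> null_sets N2" using As sets_N2 by (auto intro: null_setsI)
  qed
  obtain k1 where k1: "k1 \<in> borel_measurable lborel" "density lborel k1 = N1"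
    using sigma_finite_measure.Radon_Nikodym[OF sigma_finite_lborel ac] sets_N1 by auto
  obtain k2 where k2: "k2 \<in> borel_measurable lborel" "density lborel k2 = N2"
    using sigma_finite_measure.Radon_Nikodym[OF sigma_finite_lborel ac2] sets_N2 by auto
  have dsum: "density lborel (\<lambda>x. k1 x + k2 x) = density lborel (\<lambda>x. ennreal (psib x))"
  proof (rule measure_eqI)
    fix A assume "A \<in> sets (density lborel (\<lambda>x. k1 x + k2 x))"
    then have As: "A \<in> sets borel" by simp
    have "emeasure (density lborel (\<lambda>x. k1 x + k2 x)) A = (\<integral>\<^sup>+x. (k1 x + k2 x) * indicator A x \<partial>lborel)"
      using k1(1) k2(1) As by (subst emeasure_density) auto
    also have "\<dots> = (\<integral>\<^sup>+x. k1 x * indicator A x + k2 x * indicator A x \<partial>lborel)"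
      by (simp add: distrib_right)
    also have "\<dots> = (\<integral>\<^sup>+x. k1 x * indicator A x \<partial>lborel) + (\<integral>\<^sup>+x. k2 x * indicator A x \<partial>lborel)"
      using k1(1) k2(1) As by (intro nn_integral_add) auto
    also have "\<dots> = emeasure N1 A + emeasure N2 A"
      using k1 k2 As by (simp add: emeasure_density[symmetric])
    also have "\<dots> = ennreal (measure N1 A) + ennreal (measure N2 A)"
      using finite_measure.emeasure_eq_measure[OF fin_N1] finite_measure.emeasure_eq_measure[OF fin_N2] by simp
    also have "\<dots> = ennreal (measure D A)" using mAll[OF As] by (simp add: ennreal_plus[symmetric])
    also have "\<dots> = emeasure D A" using finite_measure.emeasure_eq_measure[OF fin_D] by simp
    finally show "emeasure (density lborel (\<lambda>x. k1 x + k2 x)) A = emeasure (density lborel (\<lambda>x. ennreal (psib x))) A"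
      by (simp add: D_def)
  qed simp
  have "AE x in lborel. k1 x + k2 x = ennreal (psib x)"
    using sigma_finite_measure.density_unique_iff[OF sigma_finite_lborel, of "\<lambda>x. k1 x + k2 x" "\<lambda>x. ennreal (psib x)"]
      dsum k1(1) k2(1) psib_meas by auto
  then have AE_k1: "AE x in lborel. k1 x \<le> ennreal (psib x)"
    by eventually_elim (metis add_increasing2 order_refl zero_le)
  define kr where "kr x = enn2real (k1 x)" for x
  have kr_meas: "kr \<in> borel_measurable borel" unfolding kr_def using k1(1) by simp
  have kr_nn: "0 \<le> kr x" for x by (simp add: kr_def)
  have AE_kr: "AE x in lborel. k1 x = ennreal (kr x) \<and> kr x \<le> psib x"
    using AE_k1
  proof eventually_elim
    case (elim x)
    then have "k1 x < top" using ennreal_less_top le_less_trans by blast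
    then have "k1 x = ennreal (kr x)" unfolding kr_def by (simp add: less_top)
    moreover have "kr x \<le> psib x" unfolding kr_def
      using enn2real_mono[OF elim] psib_nn by simp
    ultimately show ?case by simp
  qed
  show ?thesis
  proof (intro exI[of _ kr] conjI allI impI)
    show "kr \<in> borel_measurable borel" by (rule kr_meas)
    show "0 \<le> kr x" for x by (rule kr_nn)
    have "AE x in lebesgue. kr x \<le> psib x \<and> psit x = psib x"
      by (rule AE_completion) (use AE_kr AE_psib in \<open>eventually_elim, auto\<close>)
    then show "AE x in lebesgue. x \<in> {a0..b0} \<longrightarrow> kr x \<le> psi x"
      by eventually_elim (auto simp: psit_def)
  next
    fix a b assume ab': "a0 \<le> a" "a \<le> b" "b \<le> b0"
    have "(\<integral>\<^sup>+x. ennreal (kr x * indicator {a..b} x) \<partial>lborel) = (\<integral>\<^sup>+x. k1 x * indicator {a..b} x \<partial>lborel)"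
      by (rule nn_integral_cong_AE) (use AE_kr in \<open>eventually_elim, auto simp: indicator_def\<close>)
    also have "\<dots> = emeasure N1 {a..b}"
      using emeasure_density[OF k1(1), of "{a..b}"] k1(2) by simp
    also have "\<dots> = ennreal (h b - h a)"
      using N1_Icc[OF ab'(2)] ab' ab by (simp add: ht_def cl_def)
    finally have "((\<lambda>x. kr x * indicator {a..b} x) has_integral (h b - h a)) UNIV"
      using kr_meas kr_nn h_mono[OF ab'] by (intro nn_integral_has_integral) auto
    moreover have "(\<lambda>x. kr x * indicator {a..b} x) = (\<lambda>x. if x \<in> {a..b} then kr x else 0)"
      by (auto simp: indicator_def)
    ultimately show "(kr has_integral (h b - h a)) {a..b}"
      by (simp only: has_integral_restrict_UNIV)
  qed
qed

lemma borel_to_lebesgue_on: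
  fixes k :: "real \<Rightarrow> real"
  shows "k \<in> borel_measurable borel \<Longrightarrow> k \<in> borel_measurable (lebesgue_on S)"
  by (intro measurable_restrict_space1 measurable_completion) simp

lemma ai_integrable_on:
  fixes u :: "real \<Rightarrow> real"
  assumes "u absolutely_integrable_on S" "T \<subseteq> S" "T \<in> sets lebesgue"
  shows "integrable (lebesgue_on T) u"
proof -
  have "set_integrable lebesgue T u" by (rule set_integrable_subset[OF assms(1) assms(3) assms(2)])
  then show ?thesis using assms(3) by (simp add: set_integrable_def integrable_restrict_space)
qed

lemma L2_mono:
  assumes "L2 S g" "T \<subseteq> S" "S \<in> sets lebesgue" "T \<in> sets lebesgue"
  shows "L2 T g"
proof -
  have m: "g \<in> borel_measurable (lebesgue_on S)" and i: "integrable (lebesgue_on S) (\<lambda>x. (g x)\<^sup>2)"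
    using assms(1) by (auto simp: L2_def)
  have "g \<in> borel_measurable (lebesgue_on T)" by (rule measurable_restrict_mono[OF m assms(2)])
  moreover
  have "integrable lebesgue (\<lambda>x. indicator S x *\<^sub>R (g x)\<^sup>2)"
    using i assms(3) by (simp add: integrable_restrict_space)
  then have "integrable lebesgue (\<lambda>x. indicator T x *\<^sub>R (indicator S x *\<^sub>R (g x)\<^sup>2))"
    using assms(4) by (rule integrable_mult_indicator[rotated])
  moreover have "(\<lambda>x. indicator T x *\<^sub>R (indicator S x *\<^sub>R (g x)\<^sup>2)) = (\<lambda>x. indicator T x *\<^sub>R (g x)\<^sup>2)"
    using assms(2) by (auto simp: indicator_def fun_eq_iff)
  ultimately show ?thesis using assms(4) by (simp add: L2_def integrable_restrict_space)
qed

lemma abs_le_1_plus_sq: "\<bar>t::real\<bar> \<le> 1 + t\<^sup>2"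
proof (cases "\<bar>t\<bar> \<le> 1")
  case True then show ?thesis by (smt (verit) zero_le_power2)
next
  case False
  then have "\<bar>t\<bar> * 1 \<le> \<bar>t\<bar> * \<bar>t\<bar>" by (intro mult_left_mono) auto
  then show ?thesis by (simp add: power2_eq_square abs_mult_self_eq)
qed

lemma L2_abs_int:
  fixes g :: "real \<Rightarrow> real"
  assumes "L2 S g" "S \<in> sets lebesgue" "emeasure lebesgue S < \<infinity>"
  shows "g absolutely_integrable_on S"
proof -
  have m: "g \<in> borel_measurable (lebesgue_on S)" and i: "integrable (lebesgue_on S) (\<lambda>x. (g x)\<^sup>2)"
    using assms(1) by (auto simp: L2_def)
  have "finite_measure (lebesgue_on S)"
    by (rule finite_measureI) (use assms(2,3) in \<open>simp add: emeasure_restrict_space space_restrict_space\<close>)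
  then have "integrable (lebesgue_on S) (\<lambda>x. 1::real)" by (rule finite_measure.integrable_const)
  then have "integrable (lebesgue_on S) (\<lambda>x. 1 + (g x)\<^sup>2)" using i by (rule Bochner_Integration.integrable_add)
  then have "integrable (lebesgue_on S) g"
    by (rule Bochner_Integration.integrable_bound[OF _ m]) (auto intro!: AE_I2 simp: abs_le_1_plus_sq)
  then show ?thesis using assms(2) by (simp add: set_integrable_def integrable_restrict_space)
qed

lemma H1_dominated:
  fixes f phi :: "real \<Rightarrow> real" and a0 b0 :: real
  assumes ab: "a0 < b0"
    and phi_int: "phi absolutely_integrable_on {a0..b0}"
    and phi_nn: "\<And>x. x \<in> {a0..b0} \<Longrightarrow> 0 \<le> phi x"
    and phi_L2: "L2 {a0<..<b0} phi"
    and f_cont: "continuous_on {a0..b0} f"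
    and f_bnd: "\<And>x y. a0 \<le> x \<Longrightarrow> x \<le> y \<Longrightarrow> y \<le> b0 \<Longrightarrow> \<bar>f y - f x\<bar> \<le> integral {x..y} phi"
  shows "f \<in> H1 {a0<..<b0}"
proof -
  have phi_i: "phi integrable_on {a0..b0}"
    using phi_int set_lebesgue_integral_eq_integral(1) by blast
  have phi_sub: "phi integrable_on {x..y}" if "a0 \<le> x" "y \<le> b0" for x y
    using integrable_on_subinterval[OF phi_i] that by auto
  define Phi where "Phi x = integral {a0..x} phi" for x
  have Phi_add: "Phi y - Phi x = integral {x..y} phi" if "a0 \<le> x" "x \<le> y" "y \<le> b0" for x y
  proof -
    have "integral {a0..x} phi + integral {x..y} phi = integral {a0..y} phi"
      by (rule Henstock_Kurzweil_Integration.integral_combine) (use that phi_sub in auto)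
    then show ?thesis unfolding Phi_def by simp
  qed
  have Phi_cont: "continuous_on {a0..b0} Phi"
    unfolding Phi_def by (rule indefinite_integral_continuous_1[OF phi_i])
  define h where "h x = f x + Phi x" for x
  define psi where "psi x = 2 * phi x" for x
  have psi_int: "psi absolutely_integrable_on {a0..b0}"
    unfolding psi_def using phi_int by (rule set_integrable_mult_right)
  have h_cont: "continuous_on {a0..b0} h"
    unfolding h_def by (intro continuous_on_add f_cont Phi_cont)
  have h_mono: "h x \<le> h y" if "a0 \<le> x" "x \<le> y" "y \<le> b0" for x y
    using f_bnd[OF that] Phi_add[OF that] unfolding h_def by linarith
  have h_bnd: "h y - h x \<le> integral {x..y} psi" if "a0 \<le> x" "x \<le> y" "y \<le> b0" for x y
  proof -
    have "integral {x..y} psi = 2 * integral {x..y} phi" unfolding psi_def by (rule integral_mult_right)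
    then show ?thesis using f_bnd[OF that] Phi_add[OF that] unfolding h_def by linarith
  qed
  obtain k where k_meas: "k \<in> borel_measurable borel" and k_nn: "\<And>x. 0 \<le> k x"
    and k_AE: "AE x in lebesgue. x \<in> {a0..b0} \<longrightarrow> k x \<le> psi x"
    and k_int: "\<And>a b. a0 \<le> a \<Longrightarrow> a \<le> b \<Longrightarrow> b \<le> b0 \<Longrightarrow> (k has_integral (h b - h a)) {a..b}"
    using RN_interval[of a0 b0 psi h] ab psi_int phi_nn h_cont h_mono h_bnd
    by (auto simp: psi_def)
  define f' where "f' x = k x - phi x" for x
  have T: "{a0<..<b0} \<in> sets lebesgue" by simp
  have phi_m: "phi \<in> borel_measurable (lebesgue_on {a0<..<b0})"
    and phi2: "integrable (lebesgue_on {a0<..<b0}) (\<lambda>x. (phi x)\<^sup>2)"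
    using phi_L2 by (auto simp: L2_def)
  have "L2 {a0<..<b0} f"
    unfolding L2_def
  proof
    show "f \<in> borel_measurable (lebesgue_on {a0<..<b0})"
      using continuous_on_subset[OF f_cont, of "{a0<..<b0}"] T
      by (intro continuous_imp_measurable_on_sets_lebesgue) (auto simp: subset_iff)
    have "continuous_on {a0..b0} (\<lambda>x. (f x)\<^sup>2)" by (intro continuous_intros f_cont)
    then have "(\<lambda>x. (f x)\<^sup>2) absolutely_integrable_on {a0..b0}"
      by (rule absolutely_integrable_continuous_real)
    then show "integrable (lebesgue_on {a0<..<b0}) (\<lambda>x. (f x)\<^sup>2)"
      by (rule ai_integrable_on) (use T in auto)
  qed
  moreover have "L2 {a0<..<b0} f'"
    unfolding L2_def
  proof
    show fm: "f' \<in> borel_measurable (lebesgue_on {a0<..<b0})"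
      unfolding f'_def using borel_to_lebesgue_on[OF k_meas] phi_m by measurable
    show "integrable (lebesgue_on {a0<..<b0}) (\<lambda>x. (f' x)\<^sup>2)"
    proof (rule Bochner_Integration.integrable_bound[OF phi2])
      show "(\<lambda>x. (f' x)\<^sup>2) \<in> borel_measurable (lebesgue_on {a0<..<b0})" using fm by measurable
      have "AE x in lebesgue. x \<in> {a0<..<b0} \<longrightarrow> norm ((f' x)\<^sup>2) \<le> norm ((phi x)\<^sup>2)"
        using k_AE
      proof eventually_elim
        case (elim x)
        show ?case
        proof
          assume x: "x \<in> {a0<..<b0}"
          then have "k x \<le> 2 * phi x" "0 \<le> phi x" using elim phi_nn[of x] by (auto simp: psi_def)
          then have "\<bar>f' x\<bar> \<le> \<bar>phi x\<bar>" using k_nn[of x] by (auto simp: f'_def)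
          then show "norm ((f' x)\<^sup>2) \<le> norm ((phi x)\<^sup>2)"
            by (simp add: abs_le_square_iff)
        qed
      qed
      then show "AE x in lebesgue_on {a0<..<b0}. norm ((f' x)\<^sup>2) \<le> norm ((phi x)\<^sup>2)"
        using T by (simp add: AE_restrict_space_iff)
    qed
  qed
  moreover have "(f' has_integral (f b - f a)) {a..b}"
    if "a \<in> {a0<..<b0}" "b \<in> {a0<..<b0}" "a \<le> b" for a b
  proof -
    have "(k has_integral (h b - h a)) {a..b}" using that by (intro k_int) auto
    moreover have "(phi has_integral (Phi b - Phi a)) {a..b}"
      using that Phi_add[of a b] phi_sub[of a b] by (auto intro: integrable_integral)
    ultimately have "(f' has_integral ((h b - h a) - (Phi b - Phi a))) {a..b}"
      unfolding f'_def by (rule has_integral_diff)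
    then show ?thesis by (simp add: h_def)
  qed
  ultimately show ?thesis unfolding H1_def by blast
qed


lemma cont_at_pt:
  fixes G :: "real \<Rightarrow> real"
  assumes "continuous_on S G" "x0 \<in> S" "e > 0"
  shows "\<exists>d>0. \<forall>x\<in>S. \<bar>x - x0\<bar> < d \<longrightarrow> \<bar>G x - G x0\<bar> < e"
  using assms unfolding continuous_on_iff dist_real_def by blast

lemma L2_scale:
  assumes "L2 S g"
  shows "L2 S (\<lambda>x. c * g x)"
proof -
  have m: "g \<in> borel_measurable (lebesgue_on S)" and i: "integrable (lebesgue_on S) (\<lambda>x. (g x)\<^sup>2)"
    using assms by (auto simp: L2_def)
  have "integrable (lebesgue_on S) (\<lambda>x. c\<^sup>2 * (g x)\<^sup>2)"
    using i by (rule Bochner_Integration.integrable_mult_right)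
  moreover have "(\<lambda>x. c\<^sup>2 * (g x)\<^sup>2) = (\<lambda>x. (c * g x)\<^sup>2)" by (simp add: power_mult_distrib)
  ultimately show ?thesis using m by (auto simp: L2_def)
qed

lemma IFT_main:
  fixes F Fy :: "real \<Rightarrow> real \<Rightarrow> real" and g0 g1 :: "real \<Rightarrow> real"
  assumes Fy: "\<forall>x\<in>{-1..1}. \<forall>y\<in>{-1..1}. (F x has_real_derivative Fy x y) (at y within {-1..1})"
    and Fyc: "\<forall>x\<in>{-1..1}. continuous_on {-1..1} (Fy x)"
    and g0i: "g0 absolutely_integrable_on {-1..1}" and g0n: "\<forall>x\<in>{-1..1}. 0 \<le> g0 x"
    and g0L: "L2 {-1..1} g0"
    and g0b: "\<forall>y\<in>{-1..1}. \<forall>a b. -1 \<le> a \<longrightarrow> a \<le> b \<longrightarrow> b \<le> 1 \<longrightarrow> \<bar>F b y - F a y\<bar> \<le> integral {a..b} g0"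
    and g1i: "g1 absolutely_integrable_on {-1..1}"
    and g1b: "\<forall>y\<in>{-1..1}. \<forall>a b. -1 \<le> a \<longrightarrow> a \<le> b \<longrightarrow> b \<le> 1 \<longrightarrow> \<bar>Fy b y - Fy a y\<bar> \<le> integral {a..b} g1"
    and F00: "F 0 0 = 0" and pos: "Fy 0 0 > 0"
  shows "\<exists>a1 b1 a2 b2 f.
           -1 \<le> a1 \<and> a1 < 0 \<and> 0 < b1 \<and> b1 \<le> 1 \<and>
           -1 \<le> a2 \<and> a2 < 0 \<and> 0 < b2 \<and> b2 \<le> 1 \<and>
           f \<in> H1 {a1<..<b1} \<and> f ` {a1<..<b1} \<subseteq> {a2<..<b2} \<and>
           (\<forall>x\<in>{a1<..<b1}. \<forall>y\<in>{a2<..<b2}. F x y = 0 \<longleftrightarrow> y = f x) \<and>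
           (\<forall>g. g \<in> H1 {a1<..<b1} \<and> g ` {a1<..<b1} \<subseteq> {a2<..<b2} \<and>
                (\<forall>x\<in>{a1<..<b1}. \<forall>y\<in>{a2<..<b2}. F x y = 0 \<longleftrightarrow> y = g x)
                \<longrightarrow> (\<forall>x\<in>{a1<..<b1}. g x = f x))"
proof -
  let ?I = "{-1..1::real}"
  have g0_i: "g0 integrable_on ?I" using g0i set_lebesgue_integral_eq_integral(1) by blast
  have g1_i: "g1 integrable_on ?I" using g1i set_lebesgue_integral_eq_integral(1) by blast
  define G0 where "G0 x = integral {-1..x} g0" for x
  define G1 where "G1 x = integral {-1..x} g1" for x
  have G0c: "continuous_on ?I G0" unfolding G0_def by (rule indefinite_integral_continuous_1[OF g0_i])
  have G1c: "continuous_on ?I G1" unfolding G1_def by (rule indefinite_integral_continuous_1[OF g1_i])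
  have G0_add: "integral {a..b} g0 = G0 b - G0 a" if "-1 \<le> a" "a \<le> b" "b \<le> 1" for a b
  proof -
    have "integral {-1..a} g0 + integral {a..b} g0 = integral {-1..b} g0"
      by (rule Henstock_Kurzweil_Integration.integral_combine)
         (use that integrable_on_subinterval[OF g0_i, of "-1" b] in auto)
    then show ?thesis unfolding G0_def by simp
  qed
  have G1_add: "integral {a..b} g1 = G1 b - G1 a" if "-1 \<le> a" "a \<le> b" "b \<le> 1" for a b
  proof -
    have "integral {-1..a} g1 + integral {a..b} g1 = integral {-1..b} g1"
      by (rule Henstock_Kurzweil_Integration.integral_combine)
         (use that integrable_on_subinterval[OF g1_i, of "-1" b] in auto)
    then show ?thesis unfolding G1_def by simp
  qed
  have Fb: "\<bar>F x y - F x' y\<bar> \<le> \<bar>G0 x - G0 x'\<bar>" if "x \<in> ?I" "x' \<in> ?I" "y \<in> ?I" for x x' y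
  proof (cases "x' \<le> x")
    case True
    have "\<bar>F x y - F x' y\<bar> \<le> integral {x'..x} g0" using g0b that True by auto
    moreover have "integral {x'..x} g0 = G0 x - G0 x'" using that True by (intro G0_add) auto
    ultimately show ?thesis by (smt (verit))
  next
    case False
    have "\<bar>F x' y - F x y\<bar> \<le> integral {x..x'} g0" using g0b that False by auto
    moreover have "integral {x..x'} g0 = G0 x' - G0 x" using that False by (intro G0_add) auto
    ultimately show ?thesis by (smt (verit))
  qed
  have Fyb: "\<bar>Fy x y - Fy x' y\<bar> \<le> \<bar>G1 x - G1 x'\<bar>" if "x \<in> ?I" "x' \<in> ?I" "y \<in> ?I" for x x' y
  proof (cases "x' \<le> x")
    case True
    have "\<bar>Fy x y - Fy x' y\<bar> \<le> integral {x'..x} g1" using g1b that True by auto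
    moreover have "integral {x'..x} g1 = G1 x - G1 x'" using that True by (intro G1_add) auto
    ultimately show ?thesis by (smt (verit))
  next
    case False
    have "\<bar>Fy x' y - Fy x y\<bar> \<le> integral {x..x'} g1" using g1b that False by auto
    moreover have "integral {x..x'} g1 = G1 x' - G1 x" using that False by (intro G1_add) auto
    ultimately show ?thesis by (smt (verit))
  qed
  define c where "c = Fy 0 0 / 2"
  have c: "c > 0" using pos by (simp add: c_def)
  obtain d1 where d1: "d1 > 0" "\<And>x. x \<in> ?I \<Longrightarrow> \<bar>x - 0\<bar> < d1 \<Longrightarrow> \<bar>G1 x - G1 0\<bar> < c/2"
    using cont_at_pt[OF G1c, of 0 "c/2"] c by auto
  obtain d2 where d2: "d2 > 0" "\<And>y. y \<in> ?I \<Longrightarrow> \<bar>y - 0\<bar> < d2 \<Longrightarrow> \<bar>Fy 0 y - Fy 0 0\<bar> < c/2"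
    using cont_at_pt[OF bspec[OF Fyc, of 0], of 0 "c/2"] c by auto
  define \<delta> where "\<delta> = min (min d1 d2) 1 / 2"
  have \<delta>: "0 < \<delta>" "\<delta> \<le> 1/2" "\<delta> < d1" "\<delta> < d2" using d1 d2 by (auto simp: \<delta>_def)
  have Fy_pos: "Fy x y > c" if "\<bar>x\<bar> \<le> \<delta>" "\<bar>y\<bar> \<le> \<delta>" for x y
  proof -
    have "\<bar>Fy x y - Fy 0 y\<bar> \<le> \<bar>G1 x - G1 0\<bar>" using that \<delta> by (intro Fyb) auto
    also have "\<dots> < c/2" using that \<delta> by (intro d1(2)) auto
    finally have 1: "\<bar>Fy x y - Fy 0 y\<bar> < c/2" .
    have 2: "\<bar>Fy 0 y - Fy 0 0\<bar> < c/2" using that \<delta> by (intro d2(2)) auto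
    show ?thesis using 1 2 c_def by linarith
  qed
  have Fder: "(F x has_real_derivative Fy x y) (at y)" if "x \<in> ?I" "\<bar>y\<bar> < 1" for x y
  proof -
    have "y \<in> ?I" using that by auto
    then have d: "(F x has_real_derivative Fy x y) (at y within ?I)" using Fy that(1) by blast
    have i: "y \<in> interior ?I" using that by auto
    have eq: "at y within ?I = at y" by (rule at_within_interior[OF i])
    from d show ?thesis unfolding eq .
  qed
  have Fmono: "c * (y' - y) \<le> F x y' - F x y" if "\<bar>x\<bar> \<le> \<delta>" "-\<delta> \<le> y" "y \<le> y'" "y' \<le> \<delta>" for x y y'
  proof -
    have "(\<lambda>t. F x t - c * t) y \<le> (\<lambda>t. F x t - c * t) y'"
    proof (rule DERIV_nonneg_imp_nondecreasing[OF that(3)])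
      fix t assume t: "y \<le> t" "t \<le> y'"
      have d0: "(F x has_real_derivative Fy x t) (at t)" using that t \<delta> by (intro Fder) auto
      have "((\<lambda>t. F x t - c * t) has_real_derivative (Fy x t - c)) (at t)"
        using DERIV_diff[OF d0 DERIV_cmult_Id[of c t]] by simp
      moreover have "Fy x t - c \<ge> 0"
      proof -
        have "\<bar>t\<bar> \<le> \<delta>" using that t by auto
        then show ?thesis using Fy_pos[of x t] that(1) by auto
      qed
      ultimately show "\<exists>y. ((\<lambda>t. F x t - c * t) has_real_derivative y) (at t) \<and> 0 \<le> y" by blast
    qed
    then show ?thesis by (simp add: algebra_simps)
  qed
  have Fsep: "c * \<bar>y' - y\<bar> \<le> \<bar>F x y' - F x y\<bar>" if "\<bar>x\<bar> \<le> \<delta>" "\<bar>y\<bar> \<le> \<delta>" "\<bar>y'\<bar> \<le> \<delta>" for x y y'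
  proof (cases "y \<le> y'")
    case True
    have "\<bar>y' - y\<bar> = y' - y" using True by simp
    moreover have "0 \<le> c * (y' - y)" using c True by simp
    moreover have "c * (y' - y) \<le> F x y' - F x y" using that True by (intro Fmono) auto
    ultimately show ?thesis by (smt (verit))
  next
    case False
    have "\<bar>y' - y\<bar> = y - y'" using False by simp
    moreover have "0 \<le> c * (y - y')" using c False by simp
    moreover have "c * (y - y') \<le> F x y - F x y'" using that False by (intro Fmono) auto
    ultimately show ?thesis by (smt (verit))
  qed
  have Fplus0: "F 0 \<delta> \<ge> c * \<delta>" using Fmono[of 0 0 \<delta>] \<delta> F00 by auto
  have Fminus0: "F 0 (-\<delta>) \<le> - c * \<delta>" using Fmono[of 0 "-\<delta>" 0] \<delta> F00 by auto
  obtain d3 where d3: "d3 > 0" "\<And>x. x \<in> ?I \<Longrightarrow> \<bar>x - 0\<bar> < d3 \<Longrightarrow> \<bar>G0 x - G0 0\<bar> < c * \<delta>"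
    using cont_at_pt[OF G0c, of 0 "c * \<delta>"] c \<delta> by auto
  define \<epsilon> where "\<epsilon> = min d3 \<delta> / 2"
  have \<epsilon>: "0 < \<epsilon>" "\<epsilon> < \<delta>" "\<epsilon> < d3" using d3 \<delta> by (auto simp: \<epsilon>_def)
  have Fsign: "F x \<delta> > 0 \<and> F x (-\<delta>) < 0" if "\<bar>x\<bar> \<le> \<epsilon>" for x
  proof -
    have "\<bar>G0 x - G0 0\<bar> < c * \<delta>" using that \<epsilon> \<delta> by (intro d3(2)) auto
    moreover have "\<bar>F x \<delta> - F 0 \<delta>\<bar> \<le> \<bar>G0 x - G0 0\<bar>" using that \<epsilon> \<delta> by (intro Fb) auto
    moreover have "\<bar>F x (-\<delta>) - F 0 (-\<delta>)\<bar> \<le> \<bar>G0 x - G0 0\<bar>" using that \<epsilon> \<delta> by (intro Fb) auto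
    ultimately show ?thesis using Fplus0 Fminus0 by linarith
  qed
  have Funiq: "y = y'" if "\<bar>x\<bar> \<le> \<delta>" "\<bar>y\<bar> \<le> \<delta>" "\<bar>y'\<bar> \<le> \<delta>" "F x y = 0" "F x y' = 0" for x y y'
  proof -
    have "c * \<bar>y' - y\<bar> \<le> 0" using Fsep[OF that(1-3)] that(4,5) by simp
    then have "\<bar>y' - y\<bar> \<le> 0" using c by (simp add: mult_le_0_iff)
    then show ?thesis by simp
  qed
  have Fex: "\<exists>y. -\<delta> < y \<and> y < \<delta> \<and> F x y = 0" if xe: "\<bar>x\<bar> \<le> \<epsilon>" for x
  proof -
    have "continuous_on {-\<delta>..\<delta>} (F x)"
    proof (intro continuous_at_imp_continuous_on ballI)
      fix t assume "t \<in> {-\<delta>..\<delta>}"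
      then have "x \<in> ?I" "\<bar>t\<bar> < 1" using xe \<epsilon> \<delta> by auto
      then show "isCont (F x) t" by (intro DERIV_isCont[OF Fder])
    qed
    then obtain y where y: "-\<delta> \<le> y" "y \<le> \<delta>" "F x y = 0"
      using IVT'[of "F x" "-\<delta>" 0 \<delta>] Fsign[OF xe] \<delta> by auto
    then have "y \<noteq> \<delta>" "y \<noteq> -\<delta>" using Fsign[OF xe] by auto
    then show ?thesis using y by (intro exI[of _ y]) auto
  qed
  define f where "f x = (THE y. -\<delta> < y \<and> y < \<delta> \<and> F x y = 0)" for x
  have f_prop: "-\<delta> < f x \<and> f x < \<delta> \<and> F x (f x) = 0" if xe: "\<bar>x\<bar> \<le> \<epsilon>" for x
  proof -
    obtain y where y: "-\<delta> < y \<and> y < \<delta> \<and> F x y = 0" using Fex[OF xe] by blast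
    have "\<exists>!y. -\<delta> < y \<and> y < \<delta> \<and> F x y = 0"
    proof (rule ex1I[of _ y])
      show "-\<delta> < y \<and> y < \<delta> \<and> F x y = 0" by (rule y)
      fix y' assume "-\<delta> < y' \<and> y' < \<delta> \<and> F x y' = 0"
      then show "y' = y" using Funiq[of x y' y] y xe \<epsilon> by auto
    qed
    then show ?thesis unfolding f_def by (rule theI')
  qed
  have f_iff: "F x y = 0 \<longleftrightarrow> y = f x" if "x \<in> {-\<epsilon><..<\<epsilon>}" "y \<in> {-\<delta><..<\<delta>}" for x y
  proof -
    have xe: "\<bar>x\<bar> \<le> \<epsilon>" using that by auto
    note fp = f_prop[OF xe]
    have a1: "\<bar>x\<bar> \<le> \<delta>" "\<bar>y\<bar> \<le> \<delta>" "\<bar>f x\<bar> \<le> \<delta>" using xe \<epsilon> that fp by auto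
    show ?thesis
    proof
      assume "F x y = 0"
      then show "y = f x" using Funiq[OF a1] fp by blast
    next
      assume "y = f x"
      then show "F x y = 0" using fp by simp
    qed
  qed
  have f_lip: "c * \<bar>f y - f x\<bar> \<le> \<bar>G0 y - G0 x\<bar>" if "\<bar>x\<bar> \<le> \<epsilon>" "\<bar>y\<bar> \<le> \<epsilon>" for x y
  proof -
    have "c * \<bar>f y - f x\<bar> \<le> \<bar>F y (f y) - F y (f x)\<bar>"
      using f_prop[OF that(1)] f_prop[OF that(2)] that \<epsilon> by (intro Fsep) auto
    also have "\<dots> = \<bar>F y (f x) - F x (f x)\<bar>" using f_prop[OF that(1)] f_prop[OF that(2)] by simp
    also have "\<dots> \<le> \<bar>G0 y - G0 x\<bar>" using f_prop[OF that(1)] that \<epsilon> \<delta> by (intro Fb) auto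
    finally show ?thesis .
  qed
  define phi where "phi x = inverse c * g0 x" for x
  have f_H1: "f \<in> H1 {-\<epsilon><..<\<epsilon>}"
  proof (rule H1_dominated)
    show "-\<epsilon> < \<epsilon>" using \<epsilon> by simp
    have "g0 absolutely_integrable_on {-\<epsilon>..\<epsilon>}"
      by (rule set_integrable_subset[OF g0i]) (use \<epsilon> \<delta> in auto)
    then show "phi absolutely_integrable_on {-\<epsilon>..\<epsilon>}"
      unfolding phi_def by (rule set_integrable_mult_right)
    show "0 \<le> phi x" if "x \<in> {-\<epsilon>..\<epsilon>}" for x
      using g0n that \<epsilon> \<delta> c by (auto simp: phi_def)
    have "L2 {-\<epsilon><..<\<epsilon>} g0" by (rule L2_mono[OF g0L]) (use \<epsilon> \<delta> in auto)
    then show "L2 {-\<epsilon><..<\<epsilon>} phi" unfolding phi_def by (rule L2_scale)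
    show "continuous_on {-\<epsilon>..\<epsilon>} f"
      unfolding continuous_on_iff dist_real_def
    proof (intro ballI allI impI)
      fix x e :: real assume x: "x \<in> {-\<epsilon>..\<epsilon>}" and e: "0 < e"
      obtain d where d: "d > 0" "\<And>x'. x' \<in> ?I \<Longrightarrow> \<bar>x' - x\<bar> < d \<Longrightarrow> \<bar>G0 x' - G0 x\<bar> < c * e"
        using cont_at_pt[OF G0c, of x "c * e"] x \<epsilon> \<delta> c e by auto
      show "\<exists>d>0. \<forall>x'\<in>{-\<epsilon>..\<epsilon>}. \<bar>x' - x\<bar> < d \<longrightarrow> \<bar>f x' - f x\<bar> < e"
      proof (intro exI[of _ d] conjI ballI impI)
        fix x' assume x': "x' \<in> {-\<epsilon>..\<epsilon>}" "\<bar>x' - x\<bar> < d"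
        have "c * \<bar>f x' - f x\<bar> \<le> \<bar>G0 x' - G0 x\<bar>" using x x' by (intro f_lip) auto
        also have "\<dots> < c * e" using x' \<epsilon> \<delta> by (intro d(2)) auto
        finally show "\<bar>f x' - f x\<bar> < e" using c by simp
      qed (rule d(1))
    qed
    show "\<bar>f y - f x\<bar> \<le> integral {x..y} phi" if "-\<epsilon> \<le> x" "x \<le> y" "y \<le> \<epsilon>" for x y
    proof -
      have "integral {x..y} phi = inverse c * integral {x..y} g0"
        unfolding phi_def by (rule integral_mult_right)
      also have "\<dots> = inverse c * (G0 y - G0 x)" using that \<epsilon> \<delta> by (subst G0_add) auto
      finally have eq: "integral {x..y} phi = inverse c * (G0 y - G0 x)" .
      have "G0 x \<le> G0 y"
      proof -
        have "0 \<le> integral {x..y} g0"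
          using that \<epsilon> \<delta> g0n by (intro integral_nonneg integrable_on_subinterval[OF g0_i]) auto
        then show ?thesis using G0_add[of x y] that \<epsilon> \<delta> by auto
      qed
      moreover have "c * \<bar>f y - f x\<bar> \<le> \<bar>G0 y - G0 x\<bar>" using that by (intro f_lip) auto
      ultimately have "\<bar>f y - f x\<bar> \<le> inverse c * (G0 y - G0 x)"
        using c by (simp add: field_simps)
      then show ?thesis using eq by simp
    qed
  qed
  show ?thesis
  proof (rule exI[of _ "-\<epsilon>"], rule exI[of _ \<epsilon>], rule exI[of _ "-\<delta>"], rule exI[of _ \<delta>], rule exI[of _ f],
      intro conjI allI impI ballI)
    show "-1 \<le> -\<epsilon>" "-\<epsilon> < 0" "0 < \<epsilon>" "\<epsilon> \<le> 1" "-1 \<le> -\<delta>" "-\<delta> < 0" "0 < \<delta>" "\<delta> \<le> 1"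
      using \<epsilon> \<delta> by auto
    show "f \<in> H1 {-\<epsilon><..<\<epsilon>}" by (rule f_H1)
    show "f ` {-\<epsilon><..<\<epsilon>} \<subseteq> {-\<delta><..<\<delta>}" using f_prop by fastforce
    show "F x y = 0 \<longleftrightarrow> y = f x" if "x \<in> {-\<epsilon><..<\<epsilon>}" "y \<in> {-\<delta><..<\<delta>}" for x y
      using f_iff that by blast
  next
    fix g x
    assume g: "g \<in> H1 {-\<epsilon><..<\<epsilon>} \<and> g ` {-\<epsilon><..<\<epsilon>} \<subseteq> {-\<delta><..<\<delta>} \<and>
                (\<forall>x\<in>{-\<epsilon><..<\<epsilon>}. \<forall>y\<in>{-\<delta><..<\<delta>}. F x y = 0 \<longleftrightarrow> y = g x)"
      and x: "x \<in> {-\<epsilon><..<\<epsilon>}"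
    have gx: "g x \<in> {-\<delta><..<\<delta>}" using g x by blast
    then have "F x (g x) = 0" using g x by blast
    then show "g x = f x" using f_iff[OF x gx] by simp
  qed
qed


lemma Hclass_bound:
  fixes F :: "real \<Rightarrow> real \<Rightarrow> real"
  assumes "Hclass {-1..1} {-1..1} F"
  shows "\<exists>g. g absolutely_integrable_on {-1..1} \<and> L2 {-1..1} g \<and> (\<forall>x\<in>{-1..1}. 0 \<le> g x) \<and>
    (\<forall>y\<in>{-1..1}. \<forall>a b. -1 \<le> a \<longrightarrow> a \<le> b \<longrightarrow> b \<le> 1 \<longrightarrow> \<bar>F b y - F a y\<bar> \<le> integral {a..b} g)"
proof -
  obtain Fx g where gL: "L2 {-1..1} g"
    and int: "\<forall>y\<in>{-1..1}. \<forall>a\<in>{-1..1}. \<forall>b\<in>{-1..1}. a \<le> b \<longrightarrow>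
            ((\<lambda>x. Fx x y) has_integral (F b y - F a y)) {a..b}"
    and bnd: "\<forall>x\<in>{-1..1}. \<forall>y\<in>{-1..1}. \<bar>Fx x y\<bar> \<le> g x"
    using assms unfolding Hclass_def by blast
  have gi: "g absolutely_integrable_on {-1..1}"
    by (rule L2_abs_int[OF gL]) auto
  have g_i: "g integrable_on {-1..1}" using gi set_lebesgue_integral_eq_integral(1) by blast
  show ?thesis
  proof (intro exI[of _ g] conjI ballI allI impI)
    show "g absolutely_integrable_on {-1..1}" by (rule gi)
    show "L2 {-1..1} g" by (rule gL)
    show "0 \<le> g x" if "x \<in> {-1..1}" for x
    proof -
      have "\<bar>Fx x 0\<bar> \<le> g x" using bnd that by simp
      then show ?thesis by (meson abs_ge_zero order_trans)
    qed
    fix y a b :: real assume y: "y \<in> {-1..1}" and ab: "-1 \<le> a" "a \<le> b" "b \<le> 1"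
    have hi: "((\<lambda>x. Fx x y) has_integral (F b y - F a y)) {a..b}" using int y ab by auto
    have "norm (integral {a..b} (\<lambda>x. Fx x y)) \<le> integral {a..b} g"
    proof (rule Henstock_Kurzweil_Integration.integral_norm_bound_integral)
      show "(\<lambda>x. Fx x y) integrable_on {a..b}" using hi by blast
      show "g integrable_on {a..b}" by (rule integrable_on_subinterval[OF g_i]) (use ab in auto)
      show "norm (Fx x y) \<le> g x" if "x \<in> {a..b}" for x using bnd that y ab by auto
    qed
    then show "\<bar>F b y - F a y\<bar> \<le> integral {a..b} g" using integral_unique[OF hi] by simp
  qed
qed

lemma C1_cont:
  assumes "C1_on S h" shows "continuous_on S h"
proof -
  obtain D where "\<forall>y\<in>S. (h has_real_derivative D y) (at y within S)"
    using assms unfolding C1_on_def by blast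
  then show ?thesis unfolding continuous_on_eq_continuous_within
    by (blast intro: DERIV_continuous)
qed

theorem theorem5p5:
  fixes F Fy :: "real \<Rightarrow> real \<Rightarrow> real"
  assumes Fy: "\<forall>x\<in>{-1..1}. \<forall>y\<in>{-1..1}.
                 (F x has_real_derivative Fy x y) (at y within {-1..1})"
    and HF: "Hclass {-1..1} {-1..1} F"
    and HFy: "Hclass {-1..1} {-1..1} Fy"
    and F00: "F 0 0 = 0"
    and Fy00: "Fy 0 0 \<noteq> 0"
  shows "\<exists>a1 b1 a2 b2 f.
           -1 \<le> a1 \<and> a1 < 0 \<and> 0 < b1 \<and> b1 \<le> 1 \<and>
           -1 \<le> a2 \<and> a2 < 0 \<and> 0 < b2 \<and> b2 \<le> 1 \<and>
           f \<in> H1 {a1<..<b1} \<and> f ` {a1<..<b1} \<subseteq> {a2<..<b2} \<and>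
           (\<forall>x\<in>{a1<..<b1}. \<forall>y\<in>{a2<..<b2}. F x y = 0 \<longleftrightarrow> y = f x) \<and>
           (\<forall>g. g \<in> H1 {a1<..<b1} \<and> g ` {a1<..<b1} \<subseteq> {a2<..<b2} \<and>
                (\<forall>x\<in>{a1<..<b1}. \<forall>y\<in>{a2<..<b2}. F x y = 0 \<longleftrightarrow> y = g x)
                \<longrightarrow> (\<forall>x\<in>{a1<..<b1}. g x = f x))"
proof -
  obtain g0 where g0: "g0 absolutely_integrable_on {-1..1}" "L2 {-1..1} g0" "\<forall>x\<in>{-1..1}. 0 \<le> g0 x"
    "\<forall>y\<in>{-1..1}. \<forall>a b. -1 \<le> a \<longrightarrow> a \<le> b \<longrightarrow> b \<le> 1 \<longrightarrow> \<bar>F b y - F a y\<bar> \<le> integral {a..b} g0"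
    using Hclass_bound[OF HF] by blast
  obtain g1 where g1: "g1 absolutely_integrable_on {-1..1}"
    "\<forall>y\<in>{-1..1}. \<forall>a b. -1 \<le> a \<longrightarrow> a \<le> b \<longrightarrow> b \<le> 1 \<longrightarrow> \<bar>Fy b y - Fy a y\<bar> \<le> integral {a..b} g1"
    using Hclass_bound[OF HFy] by blast
  have Fyc: "\<forall>x\<in>{-1..1}. continuous_on {-1..1} (Fy x)"
    using HFy unfolding Hclass_def by (auto intro: C1_cont)
  show ?thesis
  proof (cases "Fy 0 0 > 0")
    case True
    show ?thesis by (rule IFT_main[OF Fy Fyc g0(1,3,2,4) g1 F00 True])
  next
    case False
    then have neg: "(\<lambda>x y. - Fy x y) 0 0 > 0" using Fy00 by simp
    have Fy': "\<forall>x\<in>{-1..1}. \<forall>y\<in>{-1..1}.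
                 ((\<lambda>y. - F x y) has_real_derivative (- Fy x y)) (at y within {-1..1})"
      using Fy by (auto intro: DERIV_minus)
    have Fyc': "\<forall>x\<in>{-1..1}. continuous_on {-1..1} (\<lambda>y. - Fy x y)"
      using Fyc by (auto intro: continuous_on_minus)
    have g0b': "\<forall>y\<in>{-1..1}. \<forall>a b. -1 \<le> a \<longrightarrow> a \<le> b \<longrightarrow> b \<le> 1 \<longrightarrow>
        \<bar>(- F b y) - (- F a y)\<bar> \<le> integral {a..b} g0"
      using g0(4) by (simp add: abs_minus_commute)
    have g1b': "\<forall>y\<in>{-1..1}. \<forall>a b. -1 \<le> a \<longrightarrow> a \<le> b \<longrightarrow> b \<le> 1 \<longrightarrow>
        \<bar>(- Fy b y) - (- Fy a y)\<bar> \<le> integral {a..b} g1"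
      using g1(2) by (simp add: abs_minus_commute)
    have F00': "(\<lambda>x y. - F x y) 0 0 = 0" using F00 by simp
    show ?thesis
      using IFT_main[of "\<lambda>x y. - F x y" "\<lambda>x y. - Fy x y" g0 g1, OF Fy' Fyc' g0(1,3,2) g0b' g1(1) g1b' F00' neg]
      by simp
  qed
qed

end
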